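(* Let $B=B(x^{(0)};R)\subset\mathbb R^n$, let $x^{(1)},\dots,x^{(n+1)}\in B$ be the vertices of a nondegenerate simplex $S$ with basic Lagrange polynomials $\lambda_j(x)=\sum_{i=1}^n l_{ij}x_i+l_{n+1,j}$, and let $P:C(B)\to\Pi_1(\mathbb R^n)$ be the interpolation projector with nodes $x^{(j)}$. Then $$\|P\|_B=\max_{f_j=\pm1}\Big[R\Big(\sum_{i=1}^n\Big(\sum_{j=1}^{n+1}f_jl_{ij}\Big)^2\Big)^{1/2}+\Big|\sum_{j=1}^{n+1}f_j\lambda_j(x^{(0)})\Big|\Big],$$ where the maximum is over all $(f_1,\dots,f_{n+1})\in\{-1,1\}^{n+1}$. In particular, if the center of gravity of $S$ coincides with $x^{(0)}$, then $\|P\|_B=\max_{f_j=\pm1}\big[R(\sum_{i=1}^n(\sum_{j=1}^{n+1}f_jl_{ij})^2)^{1/2}+\frac1{n+1}|\sum_{j=1}^{n+1}f_j|\big]$.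
   Context: $B(x^{(0)};R)$ is the closed Euclidean ball of center $x^{(0)}$ and radius $R$. $C(\Omega)$ is the space of continuous real functions on $\Omega$ with the sup norm; $\Pi_1(\mathbb R^n)$ is the space of polynomials of degree $\le1$ in $n$ variables. The interpolation projector $P$ with nodes $x^{(j)}$ is defined by $Pf\in\Pi_1(\mathbb R^n)$, $Pf(x^{(j)})=f(x^{(j)})$, i.e. $Pf=\sum_j f(x^{(j)})\lambda_j$; $\|P\|_B$ is its operator norm on $C(B)$. The vertex matrix $A$ of $S$ has rows $(x^{(j)}_1,\dots,x^{(j)}_n,1)$, $A^{-1}=(l_{ij})$, and $\lambda_j(x)=\sum_i l_{ij}x_i+l_{n+1,j}$. *)

theory Defs
  imports "HOL-Analysis.Analysis" "HOL-Library.FuncSet"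
begin

text \<open>Affine function x \<mapsto> a \<bullet> x + b (a polynomial of degree at most 1 on R^n);
  the coefficients of a are the l_{ij}, i = 1..n, and b is l_{n+1,j}.\<close>
definition aff :: "real^'n \<Rightarrow> real \<Rightarrow> real^'n \<Rightarrow> real" where
  "aff a b y = a \<bullet> y + b"

definition is_lagrange_basis ::
  "nat \<Rightarrow> (nat \<Rightarrow> real^'n) \<Rightarrow> (nat \<Rightarrow> real^'n) \<Rightarrow> (nat \<Rightarrow> real) \<Rightarrow> bool" where
  "is_lagrange_basis N x a b \<longleftrightarrow>
     (\<forall>j\<in>{1..N+1}. \<forall>k\<in>{1..N+1}. aff (a j) (b j) (x k) = (if j = k then 1 else 0))"

definition interp_proj ::
  "nat \<Rightarrow> (nat \<Rightarrow> real^'n) \<Rightarrow> (nat \<Rightarrow> real^'n) \<Rightarrow> (nat \<Rightarrow> real) \<Rightarrow> (real^'n \<Rightarrow> real) \<Rightarrow> real^'n \<Rightarrow> real" where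
  "interp_proj N x a b f y = (\<Sum>j=1..N+1. f (x j) * aff (a j) (b j) y)"

definition proj_norm ::
  "(real^'n) set \<Rightarrow> nat \<Rightarrow> (nat \<Rightarrow> real^'n) \<Rightarrow> (nat \<Rightarrow> real^'n) \<Rightarrow> (nat \<Rightarrow> real) \<Rightarrow> real" where
  "proj_norm K N x a b =
     (SUP f \<in> {f. continuous_on K f \<and> (\<forall>y\<in>K. \<bar>f y\<bar> \<le> 1)}.
        SUP y \<in> K. \<bar>interp_proj N x a b f y\<bar>)"

end

theory Submission
  imports Defs
begin

lemma affine_ball_bound:
  fixes c y x0 :: "'a::real_inner"
  assumes "y \<in> cball x0 R"
  shows "c \<bullet> y + d \<le> R * norm c + \<bar>c \<bullet> x0 + d\<bar>"
proof -
  have "c \<bullet> y = c \<bullet> x0 + c \<bullet> (y - x0)" by (simp add: inner_diff_right)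
  also have "c \<bullet> (y - x0) \<le> norm c * norm (y - x0)" by (rule norm_cauchy_schwarz)
  also have "norm (y - x0) \<le> R" using assms by (simp add: dist_norm norm_minus_commute)
  hence "norm c * norm (y - x0) \<le> norm c * R" by (simp add: mult_left_mono)
  finally show ?thesis by (simp add: algebra_simps)
qed

theorem theorem11p1:
  fixes x :: "nat \<Rightarrow> real^'n" and x0 :: "real^'n" and R :: real
    and a :: "nat \<Rightarrow> real^'n" and b :: "nat \<Rightarrow> real"
  defines "N \<equiv> CARD('n)"
  assumes R: "R > 0"
    and nodes: "\<forall>j\<in>{1..N+1}. x j \<in> cball x0 R"
    and nondeg: "inj_on x {1..N+1}" "\<not> affine_dependent (x ` {1..N+1})"
    and lag: "is_lagrange_basis N x a b"
  shows "proj_norm (cball x0 R) N x a b =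
           Max ((\<lambda>f. R * sqrt (\<Sum>i\<in>UNIV. (\<Sum>j=1..N+1. f j * (a j $ i))\<^sup>2)
                      + \<bar>\<Sum>j=1..N+1. f j * aff (a j) (b j) x0\<bar>)
                ` (PiE {1..N+1} (\<lambda>_. {-1, 1}))) \<and>
         ((1 / real (N+1)) *\<^sub>R (\<Sum>j=1..N+1. x j) = x0 \<longrightarrow>
         proj_norm (cball x0 R) N x a b =
           Max ((\<lambda>f. R * sqrt (\<Sum>i\<in>UNIV. (\<Sum>j=1..N+1. f j * (a j $ i))\<^sup>2)
                      + (1 / real (N+1)) * \<bar>\<Sum>j=1..N+1. f j\<bar>)
                ` (PiE {1..N+1} (\<lambda>_. {-1, 1}))))"
proof -
  define I where "I = {1..N+1}"
  define F where "F = PiE I (\<lambda>_. {-1, 1::real})"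
  define lam where "lam j y = aff (a j) (b j) y" for j y
  define cv where "cv f = (\<Sum>j\<in>I. f j *\<^sub>R a j)" for f :: "nat \<Rightarrow> real"
  define dv where "dv f = (\<Sum>j\<in>I. f j * b j)" for f :: "nat \<Rightarrow> real"
  define V where "V f = R * norm (cv f) + \<bar>\<Sum>j\<in>I. f j * lam j x0\<bar>" for f
  define K where "K = cball x0 R"
  have finI: "finite I" by (simp add: I_def)
  have finF: "finite F" unfolding F_def by (simp add: finI finite_PiE)
  have sq: "sqrt (\<Sum>i\<in>UNIV. (\<Sum>j=1..N+1. f j * (a j $ i))\<^sup>2) = norm (cv f)" for f
    unfolding cv_def norm_vec_def L2_set_def I_def by simp
  have lin: "(\<Sum>j\<in>I. f j * lam j y) = cv f \<bullet> y + dv f" for f y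
    unfolding lam_def aff_def cv_def dv_def
    by (simp add: inner_sum_left sum.distrib distrib_left mult.commute)
  have Veq: "(\<lambda>f. R * sqrt (\<Sum>i\<in>UNIV. (\<Sum>j=1..N+1. f j * (a j $ i))\<^sup>2)
                      + \<bar>\<Sum>j=1..N+1. f j * aff (a j) (b j) x0\<bar>) = V"
    by (rule ext, subst sq) (simp add: V_def I_def lam_def)
  define M where "M = Max (V ` F)"
  have Fne: "F \<noteq> {}" unfolding F_def by (simp add: PiE_eq_empty_iff)
  have Vle: "V f \<le> M" if "f \<in> F" for f
    unfolding M_def using that finF by simp
  have Vpt: "(\<Sum>j\<in>I. f j * lam j y) \<le> V f" if "y \<in> K" for f y
    unfolding lin V_def using affine_ball_bound[OF that[unfolded K_def], of "cv f" "dv f"]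
    by (simp add: lin)
  have sumabs: "(\<Sum>j\<in>I. \<bar>lam j y\<bar>) \<le> M" if "y \<in> K" for y
  proof -
    define f where "f = (\<lambda>j\<in>I. if lam j y \<ge> 0 then 1 else -1::real)"
    have "f \<in> F" unfolding F_def f_def by auto
    have "(\<Sum>j\<in>I. \<bar>lam j y\<bar>) = (\<Sum>j\<in>I. f j * lam j y)"
      by (rule sum.cong) (auto simp: f_def)
    also have "\<dots> \<le> V f" by (rule Vpt[OF that])
    also have "\<dots> \<le> M" by (rule Vle[OF \<open>f \<in> F\<close>])
    finally show ?thesis .
  qed
  define G where "G = {g. continuous_on K g \<and> (\<forall>y\<in>K. \<bar>g y\<bar> \<le> (1::real))}"
  have Kne: "K \<noteq> {}" unfolding K_def using R by simp
  have xK: "x j \<in> K" if "j \<in> I" for j using nodes that by (simp add: K_def I_def)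
  have Pbound: "\<bar>interp_proj N x a b g y\<bar> \<le> M" if "g \<in> G" "y \<in> K" for g y
  proof -
    have "\<bar>interp_proj N x a b g y\<bar> \<le> (\<Sum>j\<in>I. \<bar>g (x j) * lam j y\<bar>)"
      unfolding interp_proj_def I_def lam_def by (rule sum_abs)
    also have "\<dots> \<le> (\<Sum>j\<in>I. \<bar>lam j y\<bar>)"
    proof (rule sum_mono)
      fix j assume "j \<in> I"
      hence "\<bar>g (x j)\<bar> \<le> 1" using that(1) xK by (auto simp: G_def)
      thus "\<bar>g (x j) * lam j y\<bar> \<le> \<bar>lam j y\<bar>"
        by (simp add: abs_mult mult_left_le_one_le)
    qed
    also have "\<dots> \<le> M" by (rule sumabs[OF that(2)])
    finally show ?thesis .
  qed
  have Gne: "G \<noteq> {}" proof -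
    have "(\<lambda>_. 0) \<in> G" unfolding G_def by simp
    thus ?thesis by blast
  qed
  have inner_le: "(SUP y\<in>K. \<bar>interp_proj N x a b g y\<bar>) \<le> M" if "g \<in> G" for g
    by (rule cSUP_least[OF Kne]) (rule Pbound[OF that])
  have bddin: "bdd_above ((\<lambda>y. \<bar>interp_proj N x a b g y\<bar>) ` K)" if "g \<in> G" for g
    by (rule bdd_aboveI2[where M=M]) (rule Pbound[OF that])
  have bddout: "bdd_above ((\<lambda>g. SUP y\<in>K. \<bar>interp_proj N x a b g y\<bar>) ` G)"
    by (rule bdd_aboveI2[where M=M]) (rule inner_le)
  have PN: "proj_norm (cball x0 R) N x a b = (SUP g\<in>G. SUP y\<in>K. \<bar>interp_proj N x a b g y\<bar>)"
    unfolding proj_norm_def G_def K_def by simp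
  have upper: "proj_norm (cball x0 R) N x a b \<le> M"
    unfolding PN by (rule cSUP_least[OF Gne]) (rule inner_le)
  have lower: "M \<le> proj_norm (cball x0 R) N x a b"
  proof -
    have "M \<in> V ` F" unfolding M_def using finF Fne by simp
    then obtain f where fF: "f \<in> F" and Mf: "M = V f" by auto
    define s where "s = (if (\<Sum>j\<in>I. f j * lam j x0) \<ge> 0 then 1 else -1::real)"
    define f' where "f' = (\<lambda>j. s * f j)"
    have s2: "\<bar>s\<bar> = 1" by (simp add: s_def)
    have f'pm: "f' j \<in> {-1, 1}" if "j \<in> I" for j
      using fF that by (auto simp: F_def f'_def s_def PiE_iff)
    have cvf': "cv f' = s *\<^sub>R cv f"
      by (simp add: cv_def f'_def scaleR_sum_right)
    have sumf': "(\<Sum>j\<in>I. f' j * lam j x0) = \<bar>\<Sum>j\<in>I. f j * lam j x0\<bar>"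
      by (simp add: f'_def s_def sum_distrib_left[symmetric] sum_negf)
    define c where "c = cv f'"
    define ys where "ys = (if c = 0 then x0 else x0 + (R / norm c) *\<^sub>R c)"
    have ysK: "ys \<in> K"
      using R by (auto simp: ys_def K_def dist_norm)
    have cys: "c \<bullet> ys = c \<bullet> x0 + R * norm c"
      by (auto simp: ys_def inner_add_right power2_norm_eq_inner[symmetric] power2_eq_square)
    have val: "(\<Sum>j\<in>I. f' j * lam j ys) = V f"
    proof -
      have "(\<Sum>j\<in>I. f' j * lam j ys) = c \<bullet> ys + dv f'" unfolding c_def by (rule lin)
      also have "\<dots> = (\<Sum>j\<in>I. f' j * lam j x0) + R * norm c"
        by (simp only: cys lin c_def[symmetric])
      also have "norm c = norm (cv f)" using s2 by (simp add: c_def cvf')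
      finally show ?thesis by (simp add: V_def sumf')
    qed
    define S where "S = x ` I"
    define h where "h = (\<lambda>z. f' (inv_into I x z))"
    have injx: "inj_on x I" using nondeg(1) by (simp add: I_def)
    have hx: "h (x j) = f' j" if "j \<in> I" for j
      using that injx by (simp add: h_def)
    have T1: "continuous_on S h" unfolding S_def by (rule continuous_on_finite) (simp add: finI)
    have T2: "closedin (top_of_set K) S"
      by (rule closed_subset) (auto simp: S_def xK finI intro: finite_imp_closed)
    have T3: "(0::real) \<le> 1" by simp
    have T4: "norm (h z) \<le> 1" if "z \<in> S" for z
      using that f'pm hx by (fastforce simp: S_def)
    obtain g where gc: "continuous_on K g" and gS: "\<forall>z\<in>S. g z = h z"
      and gb: "\<forall>z\<in>K. norm (g z) \<le> (1::real)"
      apply (rule Tietze[where f=h and S=S and U=K and B=1, OF T1 T2 T3 T4])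
       apply simp
      apply (rule that)
        apply auto
      done
    have gG: "g \<in> G" using gc gb by (simp add: G_def)
    have "interp_proj N x a b g ys = (\<Sum>j\<in>I. f' j * lam j ys)"
      unfolding interp_proj_def I_def[symmetric] lam_def
      by (rule sum.cong) (auto simp: gS[rule_format] hx S_def)
    moreover have "0 \<le> V f" using R by (simp add: V_def)
    ultimately have "M = \<bar>interp_proj N x a b g ys\<bar>" using val Mf
      by simp
    also have "\<dots> \<le> (SUP y\<in>K. \<bar>interp_proj N x a b g y\<bar>)"
      by (rule cSUP_upper[OF ysK bddin[OF gG]])
    also have "\<dots> \<le> (SUP g\<in>G. SUP y\<in>K. \<bar>interp_proj N x a b g y\<bar>)"
      by (rule cSUP_upper[OF gG bddout])
    finally show ?thesis unfolding PN .
  qed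
  have main: "proj_norm (cball x0 R) N x a b = M" using upper lower by simp
  show ?thesis
  proof
    show "proj_norm (cball x0 R) N x a b =
           Max ((\<lambda>f. R * sqrt (\<Sum>i\<in>UNIV. (\<Sum>j=1..N+1. f j * (a j $ i))\<^sup>2)
                      + \<bar>\<Sum>j=1..N+1. f j * aff (a j) (b j) x0\<bar>)
                ` (PiE {1..N+1} (\<lambda>_. {-1, 1})))"
      unfolding Veq main M_def F_def I_def ..
  next
    show "(1 / real (N+1)) *\<^sub>R (\<Sum>j=1..N+1. x j) = x0 \<longrightarrow>
         proj_norm (cball x0 R) N x a b =
           Max ((\<lambda>f. R * sqrt (\<Sum>i\<in>UNIV. (\<Sum>j=1..N+1. f j * (a j $ i))\<^sup>2)
                      + (1 / real (N+1)) * \<bar>\<Sum>j=1..N+1. f j\<bar>)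
                ` (PiE {1..N+1} (\<lambda>_. {-1, 1})))"
    proof
      assume cen: "(1 / real (N+1)) *\<^sub>R (\<Sum>j=1..N+1. x j) = x0"
      have lamx0: "lam j x0 = 1 / real (N+1)" if "j \<in> I" for j
      proof -
        have "lam j x0 = (1 / real (N+1)) * (\<Sum>k\<in>I. a j \<bullet> x k) + b j"
          unfolding lam_def aff_def cen[symmetric] I_def by (simp add: inner_sum_right inner_add_right)
        also have "b j = (1 / real (N+1)) * (\<Sum>k\<in>I. b j)" by (simp add: I_def)
        finally have "lam j x0 = (1 / real (N+1)) * (\<Sum>k\<in>I. lam j (x k))"
          by (simp add: lam_def aff_def sum.distrib distrib_left)
        also have "(\<Sum>k\<in>I. lam j (x k)) = (\<Sum>k\<in>I. if j = k then 1 else 0)"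
          using lag that unfolding is_lagrange_basis_def lam_def I_def
          by (intro sum.cong) auto
        also have "\<dots> = 1" using that finI by simp
        finally show ?thesis by simp
      qed
      have "V f = R * sqrt (\<Sum>i\<in>UNIV. (\<Sum>j=1..N+1. f j * (a j $ i))\<^sup>2)
                      + (1 / real (N+1)) * \<bar>\<Sum>j=1..N+1. f j\<bar>" for f
      proof -
        have "(\<Sum>j\<in>I. f j * lam j x0) = (1 / real (N+1)) * (\<Sum>j\<in>I. f j)"
          by (simp add: lamx0 sum_distrib_left mult.commute sum_divide_distrib)
        thus ?thesis unfolding V_def I_def[symmetric] by (simp add: abs_mult sq[unfolded I_def[symmetric]])
      qed
      hence "V = (\<lambda>f. R * sqrt (\<Sum>i\<in>UNIV. (\<Sum>j=1..N+1. f j * (a j $ i))\<^sup>2)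
                      + (1 / real (N+1)) * \<bar>\<Sum>j=1..N+1. f j\<bar>)" by (rule ext)
      thus "proj_norm (cball x0 R) N x a b =
           Max ((\<lambda>f. R * sqrt (\<Sum>i\<in>UNIV. (\<Sum>j=1..N+1. f j * (a j $ i))\<^sup>2)
                      + (1 / real (N+1)) * \<bar>\<Sum>j=1..N+1. f j\<bar>)
                ` (PiE {1..N+1} (\<lambda>_. {-1, 1})))"
        using main by (simp add: M_def F_def I_def)
    qed
  qed
qed

end
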